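(* Let $F\in\mathcal F^N$ and let $X^1,\dots,X^N$ be mm-spaces. For $i=1,\dots,N$ let $F^i:=F\circ\iota_i$, where $\iota_i\colon[0,+\infty)\to[0,+\infty)^N$ places its argument in the $i$-th coordinate and $0$ elsewhere. Then for every $\kappa_1\in(0,1)$ and $\kappa_2,\dots,\kappa_N\in(0,1/4)$, $$\mathrm{OD}\Big(\big(\textstyle\prod_{i=1}^NX^i,d_F,\bigotimes_{i=1}^Nm_{X^i}\big);-2\sum_{i=1}^N\kappa_i\Big)\le 4F^1(\mathrm{OD}(X^1;-\kappa_1))+8\sum_{i=2}^NF^i(\mathrm{OD}(X^i;-\kappa_i)).$$
   Context: An mm-space is a triple $(X,d_X,m_X)$ with $(X,d_X)$ complete separable metric space and $m_X$ a Borel probability measure. $\mathcal F^N$ is the set of continuous functions $F\colon[0,+\infty)^N\to[0,+\infty)$ such that for any metric spaces $(X_i,d_i)$, $d_F((x_i),(x'_i)):=F(d_1(x_1,x'_1),\dots,d_N(x_N,x'_N))$ is a metric on $\prod X_i$. Partial diameter: $\mathrm{PD}(X;\alpha)$ = infimum of $\operatorname{diam}A$ over Borel $A$ with $m_X(A)\ge\alpha$. Observable diameter: $\mathrm{OD}(X;-\kappa):=\sup_f\mathrm{PD}((\mathbb R,|\cdot|,f_*m_X);1-\kappa)$ over 1-Lipschitz $f\colon X\to\mathbb R$. *)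

theory Defs
  imports "HOL-Probability.Probability"
begin

definition mm_space :: "'a set \<Rightarrow> ('a \<Rightarrow> 'a \<Rightarrow> real) \<Rightarrow> 'a measure \<Rightarrow> bool" where
  "mm_space X d m \<longleftrightarrow>
     Metric_space X d \<and> Metric_space.mcomplete X d \<and>
     separable_space (Metric_space.mtopology X d) \<and>
     space m = X \<and>
     sets m = sigma_sets X {U. openin (Metric_space.mtopology X d) U} \<and>
     prob_space m"

text \<open>Diameter of a subset of the reals, with values in [0,\<infinity>]
  (empty set has diameter 0, unbounded sets have diameter \<infinity>).\<close>
definition ediam :: "real set \<Rightarrow> ennreal" where
  "ediam A = (SUP x\<in>A. SUP y\<in>A. ennreal (dist x y))"

definition partial_diam :: "real measure \<Rightarrow> real \<Rightarrow> ennreal" where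
  "partial_diam \<mu> \<alpha> = (INF A\<in>{A. A \<in> sets \<mu> \<and> measure \<mu> A \<ge> \<alpha>}. ediam A)"

definition lipschitz1 :: "'a set \<Rightarrow> ('a \<Rightarrow> 'a \<Rightarrow> real) \<Rightarrow> ('a \<Rightarrow> real) \<Rightarrow> bool" where
  "lipschitz1 X d f \<longleftrightarrow> (\<forall>x\<in>X. \<forall>y\<in>X. \<bar>f x - f y\<bar> \<le> d x y)"

definition obs_diam :: "'a set \<Rightarrow> ('a \<Rightarrow> 'a \<Rightarrow> real) \<Rightarrow> 'a measure \<Rightarrow> real \<Rightarrow> ennreal" where
  "obs_diam X d m \<kappa> =
     (SUP f\<in>{f. lipschitz1 X d f}. partial_diam (distr m borel f) (1 - \<kappa>))"

text \<open>The metric d_F on the product of N spaces (indices 1..N, points are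
  extensional functions on {1..N}).\<close>
definition prod_metric :: "nat \<Rightarrow> ((nat \<Rightarrow> real) \<Rightarrow> real) \<Rightarrow> (nat \<Rightarrow> 'a \<Rightarrow> 'a \<Rightarrow> real)
     \<Rightarrow> (nat \<Rightarrow> 'a) \<Rightarrow> (nat \<Rightarrow> 'a) \<Rightarrow> real" where
  "prod_metric N F d x y = F (\<lambda>i\<in>{1..N}. d i (x i) (y i))"

text \<open>The class F^N: continuous F : [0,\<infinity>)^N \<rightarrow> [0,\<infinity>) such that d_F is a metric
  on the product for all metric spaces. [0,\<infinity>)^N is represented by extensional
  functions on {1..N}. Metric spaces are taken with carriers in a fixed infinite type
  (real); since the metric axioms involve at most three points per factor, this is
  equivalent to quantifying over all metric spaces.\<close>
definition F_class :: "nat \<Rightarrow> ((nat \<Rightarrow> real) \<Rightarrow> real) \<Rightarrow> bool" where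
  "F_class N F \<longleftrightarrow>
     continuous_on (PiE {1..N} (\<lambda>_. {0..})) F \<and>
     (\<forall>t\<in>PiE {1..N} (\<lambda>_. {0..}). 0 \<le> F t) \<and>
     (\<forall>(Y::nat \<Rightarrow> real set) e. (\<forall>i\<in>{1..N}. Metric_space (Y i) (e i)) \<longrightarrow>
        Metric_space (PiE {1..N} Y) (prod_metric N F e))"

definition coord_emb :: "nat \<Rightarrow> nat \<Rightarrow> real \<Rightarrow> (nat \<Rightarrow> real)" where
  "coord_emb N i t = (\<lambda>j\<in>{1..N}. if j = i then t else 0)"

end

theory Submission
  imports Defs
begin

lemma mm_meas_cont:
  fixes g :: "'a \<Rightarrow> real"
  assumes mm: "mm_space X d m"
    and c: "\<And>x e. x \<in> X \<Longrightarrow> e > 0 \<Longrightarrow> \<exists>\<delta>>0. \<forall>y\<in>X. d x y < \<delta> \<longrightarrow> \<bar>g x - g y\<bar> < e"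
  shows "g \<in> borel_measurable m"
proof (rule borel_measurableI)
  fix S :: "real set" assume S: "open S"
  interpret Metric_space X d using mm by (simp add: mm_space_def)
  have sp: "space m = X" and se: "sets m = sigma_sets X {U. openin mtopology U}"
    using mm by (auto simp: mm_space_def)
  have "openin mtopology (g -` S \<inter> X)"
    unfolding openin_mtopology
  proof (intro conjI allI impI)
    fix x assume x: "x \<in> g -` S \<inter> X"
    then obtain e where e: "e > 0" "ball (g x) e \<subseteq> S"
      using S open_contains_ball by blast
    obtain \<delta> where \<delta>: "\<delta> > 0" "\<forall>y\<in>X. d x y < \<delta> \<longrightarrow> \<bar>g x - g y\<bar> < e"
      using c[of x e] x e by auto
    have "mball x \<delta> \<subseteq> g -` S \<inter> X"
    proof
      fix y assume "y \<in> mball x \<delta>"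
      then have "y \<in> X" "\<bar>g x - g y\<bar> < e" using \<delta> by auto
      then show "y \<in> g -` S \<inter> X" using e by (auto simp: dist_real_def)
    qed
    then show "\<exists>r>0. mball x r \<subseteq> g -` S \<inter> X" using \<delta> by blast
  qed auto
  then show "g -` S \<inter> space m \<in> sets m"
    unfolding sp se by (auto intro: sigma_sets.Basic)
qed

lemma lip_meas:
  assumes mm: "mm_space X d m" and l: "lipschitz1 X d f"
  shows "f \<in> borel_measurable m"
  by (rule mm_meas_cont[OF mm]) (use l in \<open>auto simp: lipschitz1_def intro!: exI[of _ e for e]\<close>, meson le_less_trans)


lemma ediam_interval: "a \<le> b \<Longrightarrow> ediam {a..b} \<le> ennreal (b - a)"
  unfolding ediam_def
  by (intro SUP_least ennreal_leI) (auto simp: dist_real_def)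

lemma pd_le:
  assumes f: "f \<in> borel_measurable M" and A: "A \<in> sets borel"
    and ms: "measure M (f -` A \<inter> space M) \<ge> \<alpha>"
  shows "partial_diam (distr M borel f) \<alpha> \<le> ediam A"
  unfolding partial_diam_def
  by (rule INF_lower) (use A ms f in \<open>auto simp: measure_distr\<close>)

lemma mm_prob: "mm_space X d m \<Longrightarrow> prob_space m"
  by (simp add: mm_space_def)
lemma mm_space_eq: "mm_space X d m \<Longrightarrow> space m = X"
  by (simp add: mm_space_def)
lemma mm_metric: "mm_space X d m \<Longrightarrow> Metric_space X d"
  by (simp add: mm_space_def)

lemma mm_ball_big:
  assumes mm: "mm_space X d m" and x0: "x0 \<in> X" and k: "0 < \<kappa>"
  shows "\<exists>n::nat. measure m {y\<in>X. d x0 y < real n} > 1 - \<kappa>"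
proof -
  interpret P: prob_space m using mm_prob[OF mm] .
  interpret Metric_space X d using mm_metric[OF mm] .
  have sp: "space m = X" using mm_space_eq[OF mm] .
  define B where "B n = {y\<in>X. d x0 y < real n}" for n :: nat
  have Bs: "B n \<in> sets m" for n
  proof -
    have "(\<lambda>y. d x0 y) \<in> borel_measurable m"
      proof (rule mm_meas_cont[OF mm])
      fix x e assume x: "x \<in> X" and e: "(e::real) > 0"
      have "\<bar>d x0 x - d x0 y\<bar> \<le> d x y" if y: "y \<in> X" for y
        using triangle[OF x0 x y] triangle[OF x0 y x] commute[of x y] by auto
      then show "\<exists>\<delta>>0. \<forall>y\<in>X. d x y < \<delta> \<longrightarrow> \<bar>d x0 x - d x0 y\<bar> < e"
        using e by (meson le_less_trans)
    qed
    then have "{y\<in>space m. d x0 y < real n} \<in> sets m" by measurable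
    then show ?thesis by (simp add: B_def sp)
  qed
  have inc: "incseq B" unfolding B_def incseq_def by auto
  have U: "(\<Union>n. B n) = X"
  proof -
    have "\<exists>n::nat. d x0 y < real n" for y by (rule reals_Archimedean2)
    then show ?thesis unfolding B_def by auto
  qed
  have "(\<lambda>n. measure m (B n)) \<longlonglongrightarrow> measure m (\<Union>n. B n)"
    by (rule P.finite_Lim_measure_incseq) (use Bs inc in auto)
  then have "(\<lambda>n. measure m (B n)) \<longlonglongrightarrow> 1"
    using U P.prob_space sp by simp
  then have "eventually (\<lambda>n. measure m (B n) > 1 - \<kappa>) sequentially"
    by (rule order_tendstoD) (use k in simp)
  then obtain n where "measure m (B n) > 1 - \<kappa>" unfolding eventually_sequentially by blast
  then show ?thesis unfolding B_def by blast
qed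

lemma od_finite:
  assumes mm: "mm_space X d m" and k: "0 < \<kappa>"
  shows "obs_diam X d m \<kappa> < \<infinity>"
proof -
  interpret P: prob_space m using mm_prob[OF mm] .
  have sp: "space m = X" using mm_space_eq[OF mm] .
  obtain x0 where x0: "x0 \<in> X" using P.not_empty sp by auto
  obtain n :: nat where n: "measure m {y\<in>X. d x0 y < real n} > 1 - \<kappa>"
    using mm_ball_big[OF mm x0 k] by blast
  have "obs_diam X d m \<kappa> \<le> ennreal (2 * real n)"
    unfolding obs_diam_def
  proof (rule SUP_least)
    fix f assume "f \<in> {f. lipschitz1 X d f}"
    then have l: "lipschitz1 X d f" by simp
    have fm: "f \<in> borel_measurable m" by (rule lip_meas[OF mm l])
    let ?A = "{f x0 - real n .. f x0 + real n}"
    have sub: "{y\<in>X. d x0 y < real n} \<subseteq> f -` ?A \<inter> space m"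
    proof
      fix y assume y: "y \<in> {y\<in>X. d x0 y < real n}"
      then have "\<bar>f x0 - f y\<bar> \<le> d x0 y" using l x0 unfolding lipschitz1_def by blast
      moreover have "d x0 y < real n" using y by simp
      ultimately have "\<bar>f x0 - f y\<bar> \<le> real n" by linarith
      then have "f x0 - real n \<le> f y" "f y \<le> f x0 + real n" by linarith+
      moreover have "y \<in> space m" using y sp by simp
      ultimately show "y \<in> f -` ?A \<inter> space m" by simp
    qed
    have "measure m {y\<in>X. d x0 y < real n} \<le> measure m (f -` ?A \<inter> space m)"
      by (rule P.finite_measure_mono[OF sub], rule measurable_sets[OF fm]) simp
    then have "partial_diam (distr m borel f) (1 - \<kappa>) \<le> ediam ?A"
      using n by (intro pd_le[OF fm]) auto
    also have "\<dots> \<le> ennreal (2 * real n)"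
      using ediam_interval[of "f x0 - real n" "f x0 + real n"] by simp
    finally show "partial_diam (distr m borel f) (1 - \<kappa>) \<le> ennreal (2 * real n)" .
  qed
  moreover have "ennreal (2 * real n) < \<infinity>" by simp
  ultimately show ?thesis by (rule le_less_trans)
qed


lemma od_ge_pd:
  assumes mm: "mm_space X d m" and l: "lipschitz1 X d f"
  shows "partial_diam (distr m borel f) (1 - \<kappa>) \<le> obs_diam X d m \<kappa>"
  unfolding obs_diam_def by (rule SUP_upper) (use l in simp)

lemma od_eq:
  assumes mm: "mm_space X d m" and k: "0 < \<kappa>"
  shows "obs_diam X d m \<kappa> = ennreal (enn2real (obs_diam X d m \<kappa>))"
  using od_finite[OF mm k] by (simp add: ennreal_enn2real_if less_top)

lemma sep:
  assumes mm: "mm_space X d m" and k: "0 < \<kappa>"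
    and B0: "B0 \<in> sets m" "measure m B0 > \<kappa>"
    and B1: "B1 \<in> sets m" "measure m B1 > \<kappa>"
    and e: "e > 0"
  shows "\<exists>a\<in>B0. \<exists>b\<in>B1. d a b < enn2real (obs_diam X d m \<kappa>) + e"
proof (rule ccontr)
  assume H: "\<not> ?thesis"
  interpret P: prob_space m using mm_prob[OF mm] .
  interpret Metric_space X d using mm_metric[OF mm] .
  have sp: "space m = X" using mm_space_eq[OF mm] .
  define D where "D = enn2real (obs_diam X d m \<kappa>)"
  have B0X: "B0 \<subseteq> X" "B1 \<subseteq> X" using B0 B1 sets.sets_into_space sp by auto
  have "B0 \<noteq> {}" using B0 k by auto
  define h where "h y = Inf ((\<lambda>a. d a y) ` B0)" for y
  have bdd: "bdd_below ((\<lambda>a. d a y) ` B0)" for y by (rule bdd_belowI[of _ 0]) auto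
  have hle: "h y \<le> d a y" if "a \<in> B0" for a y
    unfolding h_def by (rule cInf_lower) (use that bdd in auto)
  have hge: "c \<le> h y" if "\<And>a. a \<in> B0 \<Longrightarrow> c \<le> d a y" for c y
    unfolding h_def by (rule cInf_greatest) (use that \<open>B0 \<noteq> {}\<close> in auto)
  have h0: "0 \<le> h y" for y by (rule hge) auto
  have hl: "lipschitz1 X d h"
    unfolding lipschitz1_def
  proof (intro ballI)
    fix x y assume x: "x \<in> X" and y: "y \<in> X"
    have "h x - d x y \<le> h y"
    proof (rule hge)
      fix a assume a: "a \<in> B0"
      have "d a x \<le> d a y + d y x" using triangle[of a y x] a B0X x y by auto
      then show "h x - d x y \<le> d a y" using hle[OF a, of x] commute[of x y] by linarith
    qed
    moreover have "h y - d x y \<le> h x"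
    proof (rule hge)
      fix a assume a: "a \<in> B0"
      have "d a y \<le> d a x + d x y" using triangle[of a x y] a B0X x y by auto
      then show "h y - d x y \<le> d a x" using hle[OF a, of y] by linarith
    qed
    ultimately show "\<bar>h x - h y\<bar> \<le> d x y" by linarith
  qed
  have hm: "h \<in> borel_measurable m" by (rule lip_meas[OF mm hl])
  have "partial_diam (distr m borel h) (1 - \<kappa>) \<le> ennreal D"
  proof -
    have "obs_diam X d m \<kappa> = ennreal D" using od_eq[OF mm k] unfolding D_def .
    then show ?thesis using od_ge_pd[OF mm hl, of \<kappa>] by simp
  qed
  also have "\<dots> < ennreal (D + e)"
    using e D_def by (simp add: ennreal_lessI)
  finally have "(INF A\<in>{A. A \<in> sets (distr m borel h) \<and> measure (distr m borel h) A \<ge> 1 - \<kappa>}. ediam A) < ennreal (D + e)"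
    unfolding partial_diam_def .
  then have "\<exists>A\<in>{A. A \<in> sets (distr m borel h) \<and> measure (distr m borel h) A \<ge> 1 - \<kappa>}. ediam A < ennreal (D + e)"
    by (simp only: INF_less_iff)
  then obtain A where A: "A \<in> sets borel" "measure (distr m borel h) A \<ge> 1 - \<kappa>"
    and Ad: "ediam A < ennreal (D + e)"
    by auto
  define Q where "Q = h -` A \<inter> space m"
  have Qs: "Q \<in> sets m" using hm A unfolding Q_def by measurable
  have Qm: "measure m Q \<ge> 1 - \<kappa>" using A hm by (simp add: measure_distr Q_def)
  have meet: "Q \<inter> B \<noteq> {}" if "B \<in> sets m" "measure m B > \<kappa>" for B
  proof
    assume "Q \<inter> B = {}"
    then have "measure m (Q \<union> B) = measure m Q + measure m B"
      using Qs that by (simp add: P.finite_measure_Union)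
    then show False using Qm that P.prob_le_1[of "Q \<union> B"] by linarith
  qed
  obtain a where a: "a \<in> Q" "a \<in> B0" using meet[OF B0] by auto
  obtain b where b: "b \<in> Q" "b \<in> B1" using meet[OF B1] by auto
  have "h a = 0" using hle[OF a(2), of a] h0[of a] a B0X by auto
  moreover have "h b \<ge> D + e"
  proof (rule hge)
    fix a' assume "a' \<in> B0"
    then show "D + e \<le> d a' b" using H b(2) unfolding D_def by (auto simp: not_less)
  qed
  moreover have ha: "h a \<in> A" and hb: "h b \<in> A" using a b Q_def by auto
  ultimately have "ennreal (D + e) \<le> ennreal (dist (h b) (h a))"
    by (intro ennreal_leI) (simp add: dist_real_def)
  also have "\<dots> \<le> ediam A"
    unfolding ediam_def by (rule SUP_upper2[OF hb], rule SUP_upper[OF ha])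
  finally have "ennreal (D + e) \<le> ediam A" .
  then show False using Ad by simp
qed


definition lq :: "'a measure \<Rightarrow> real \<Rightarrow> ('a \<Rightarrow> real) \<Rightarrow> real" where
  "lq M k \<phi> = Inf {t. measure M {x\<in>space M. \<phi> x \<le> t} > k}"

lemma lq_sets:
  fixes \<phi> :: "'a \<Rightarrow> real"
  assumes "\<phi> \<in> borel_measurable M"
  shows "{x\<in>space M. \<phi> x \<le> t} \<in> sets M" "{x\<in>space M. \<phi> x < t} \<in> sets M"
  using assms by measurable

lemma lq_ne:
  fixes \<phi> :: "'a \<Rightarrow> real"
  assumes P: "prob_space M" and f: "\<phi> \<in> borel_measurable M" and k: "k < 1"
  shows "{t. measure M {x\<in>space M. \<phi> x \<le> t} > k} \<noteq> {}"
proof -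
  interpret prob_space M by (rule P)
  define B where "B n = {x\<in>space M. \<phi> x \<le> real n}" for n :: nat
  have Bs: "range B \<subseteq> sets M" using lq_sets[OF f] unfolding B_def by auto
  have inc: "incseq B" unfolding B_def incseq_def by auto
  have U: "(\<Union>n. B n) = space M"
  proof -
    have "\<exists>n::nat. \<phi> x \<le> real n" for x by (rule real_arch_simple)
    then show ?thesis unfolding B_def by auto
  qed
  have "(\<lambda>n. measure M (B n)) \<longlonglongrightarrow> 1"
    using finite_Lim_measure_incseq[OF Bs inc] U prob_space by simp
  then have "eventually (\<lambda>n. measure M (B n) > k) sequentially"
    by (rule order_tendstoD) (use k in simp)
  then obtain n where "measure M (B n) > k" unfolding eventually_sequentially by blast
  then show ?thesis unfolding B_def by blast
qed

lemma lq_bdd: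
  fixes \<phi> :: "'a \<Rightarrow> real"
  assumes P: "prob_space M" and f: "\<phi> \<in> borel_measurable M" and k: "0 < k"
  shows "bdd_below {t. measure M {x\<in>space M. \<phi> x \<le> t} > k}"
proof -
  interpret prob_space M by (rule P)
  define B where "B n = {x\<in>space M. \<phi> x \<le> - real n}" for n :: nat
  have Bs: "range B \<subseteq> sets M" using lq_sets[OF f] unfolding B_def by auto
  have dec: "decseq B" unfolding B_def decseq_def by auto
  have U: "(\<Inter>n. B n) = {}"
  proof -
    show ?thesis
    proof (rule equals0I)
      fix x assume x: "x \<in> (\<Inter>n. B n)"
      obtain n :: nat where "- \<phi> x < real n" using reals_Archimedean2 by blast
      moreover have "x \<in> B n" using x by blast
      ultimately show False unfolding B_def by simp
    qed
  qed
  have "(\<lambda>n. measure M (B n)) \<longlonglongrightarrow> 0"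
    using finite_Lim_measure_decseq[OF Bs dec] U by simp
  then have "eventually (\<lambda>n. measure M (B n) < k) sequentially"
    by (rule order_tendstoD) (use k in simp)
  then obtain n where n: "measure M (B n) < k" unfolding eventually_sequentially by blast
  show ?thesis
  proof (rule bdd_belowI)
    fix t assume t: "t \<in> {t. measure M {x\<in>space M. \<phi> x \<le> t} > k}"
    show "- real n \<le> t"
    proof (rule ccontr)
      assume "\<not> - real n \<le> t"
      then have "{x\<in>space M. \<phi> x \<le> t} \<subseteq> B n" unfolding B_def by auto
      then have "measure M {x\<in>space M. \<phi> x \<le> t} \<le> measure M (B n)"
        using Bs by (intro finite_measure_mono) auto
      then show False using t n by simp
    qed
  qed
qed

lemma lq_upper:
  fixes \<phi> :: "'a \<Rightarrow> real"
  assumes P: "prob_space M" and f: "\<phi> \<in> borel_measurable M" and k: "0 < k" "k < 1"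
    and e: "e > 0"
  shows "measure M {x\<in>space M. \<phi> x \<le> lq M k \<phi> + e} > k"
proof -
  interpret prob_space M by (rule P)
  let ?S = "{t. measure M {x\<in>space M. \<phi> x \<le> t} > k}"
  have "Inf ?S < lq M k \<phi> + e" unfolding lq_def using e by simp
  then obtain t where t: "t \<in> ?S" "t < lq M k \<phi> + e"
    using cInf_less_iff[OF lq_ne[OF P f k(2)] lq_bdd[OF P f k(1)]] by auto
  have "{x\<in>space M. \<phi> x \<le> t} \<subseteq> {x\<in>space M. \<phi> x \<le> lq M k \<phi> + e}" using t by auto
  then have "measure M {x\<in>space M. \<phi> x \<le> t} \<le> measure M {x\<in>space M. \<phi> x \<le> lq M k \<phi> + e}"
    using lq_sets[OF f] by (intro finite_measure_mono) auto
  then show ?thesis using t by simp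
qed

lemma lq_lower:
  fixes \<phi> :: "'a \<Rightarrow> real"
  assumes P: "prob_space M" and f: "\<phi> \<in> borel_measurable M" and k: "0 < k" "k < 1"
  shows "measure M {x\<in>space M. \<phi> x < lq M k \<phi>} \<le> k"
proof -
  interpret prob_space M by (rule P)
  let ?S = "{t. measure M {x\<in>space M. \<phi> x \<le> t} > k}"
  define l where "l = lq M k \<phi>"
  define B where "B n = {x\<in>space M. \<phi> x \<le> l - 1 / real (Suc n)}" for n :: nat
  have Bs: "range B \<subseteq> sets M" using lq_sets[OF f] unfolding B_def by auto
  have inc: "incseq B"
  proof (rule incseq_SucI)
    fix n
    have "1 / real (Suc (Suc n)) \<le> 1 / real (Suc n)" by (simp add: frac_le)
    then show "B n \<subseteq> B (Suc n)" unfolding B_def by auto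
  qed
  have U: "(\<Union>n. B n) = {x\<in>space M. \<phi> x < l}"
  proof -
    have "\<exists>n. \<phi> x \<le> l - 1 / real (Suc n)" if "\<phi> x < l" for x
    proof -
      have "0 < l - \<phi> x" using that by simp
      then obtain n where "inverse (real (Suc n)) < l - \<phi> x" using reals_Archimedean by blast
      then have "1 / real (Suc n) < l - \<phi> x" by (simp add: inverse_eq_divide)
      then show ?thesis by (intro exI[of _ n]) linarith
    qed
    moreover have "\<phi> x < l" if "\<phi> x \<le> l - 1 / real (Suc n)" for x n
    proof -
      have "0 < 1 / real (Suc n)" by simp
      then show ?thesis using that by linarith
    qed
    ultimately show ?thesis unfolding B_def by blast
  qed
  have Bk: "measure M (B n) \<le> k" for n
  proof (rule ccontr)
    assume "\<not> measure M (B n) \<le> k"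
    then have "l - 1 / real (Suc n) \<in> ?S" unfolding B_def by simp
    then have "l \<le> l - 1 / real (Suc n)"
      unfolding l_def lq_def by (rule cInf_lower[OF _ lq_bdd[OF P f k(1)]])
    then show False by simp
  qed
  have "(\<lambda>n. measure M (B n)) \<longlonglongrightarrow> measure M (\<Union>n. B n)"
    by (rule finite_Lim_measure_incseq[OF Bs inc])
  then have "measure M (\<Union>n. B n) \<le> k"
    by (rule LIMSEQ_le_const2) (use Bk in auto)
  then show ?thesis using U l_def by simp
qed

lemma lq_shift:
  fixes \<phi> \<psi> :: "'a \<Rightarrow> real"
  assumes P: "prob_space M" and f: "\<phi> \<in> borel_measurable M" and g: "\<psi> \<in> borel_measurable M"
    and k: "0 < k" "k < 1"
    and le: "\<And>x. x \<in> space M \<Longrightarrow> \<psi> x \<le> \<phi> x + c"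
  shows "lq M k \<psi> \<le> lq M k \<phi> + c"
proof -
  interpret prob_space M by (rule P)
  have "lq M k \<psi> - c \<le> Inf {t. measure M {x\<in>space M. \<phi> x \<le> t} > k}"
  proof (rule cInf_greatest[OF lq_ne[OF P f k(2)]])
    fix t assume t: "t \<in> {t. measure M {x\<in>space M. \<phi> x \<le> t} > k}"
    have "{x\<in>space M. \<phi> x \<le> t} \<subseteq> {x\<in>space M. \<psi> x \<le> t + c}"
    proof
      fix x assume "x \<in> {x\<in>space M. \<phi> x \<le> t}"
      then show "x \<in> {x\<in>space M. \<psi> x \<le> t + c}" using le[of x] by simp
    qed
    then have "measure M {x\<in>space M. \<phi> x \<le> t} \<le> measure M {x\<in>space M. \<psi> x \<le> t + c}"
      using lq_sets[OF g] by (intro finite_measure_mono) auto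
    then have "t + c \<in> {t. measure M {x\<in>space M. \<psi> x \<le> t} > k}" using t by simp
    then have "lq M k \<psi> \<le> t + c"
      unfolding lq_def by (rule cInf_lower[OF _ lq_bdd[OF P g k(1)]])
    then show "lq M k \<psi> - c \<le> t" by simp
  qed
  then show ?thesis unfolding lq_def by simp
qed


lemma dist_fun_le2:
  fixes x y :: "nat \<Rightarrow> real"
  assumes le: "\<And>i. dist (x i) (y i) \<le> \<delta>"
  shows "dist x y \<le> 2 * \<delta>"
proof -
  have s1: "summable (\<lambda>n. (1/2)^n * min (dist (x (from_nat n)) (y (from_nat n))) 1)"
    by (rule summable_comparison_test'[of "\<lambda>n. (1/2::real)^n"]) (auto simp: summable_geometric_iff)
  have s2: "summable (\<lambda>n. (1/2::real)^n * \<delta>)"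
    by (intro summable_mult2) (simp add: summable_geometric_iff)
  have "dist x y \<le> (\<Sum>n. (1/2::real)^n * \<delta>)"
    unfolding dist_fun_def
  proof (rule suminf_le[OF _ s1 s2])
    fix n
    have "min (dist (x (from_nat n)) (y (from_nat n))) 1 \<le> \<delta>"
      using le[of "from_nat n"] by linarith
    then show "(1/2)^n * min (dist (x (from_nat n)) (y (from_nat n))) 1 \<le> (1/2::real)^n * \<delta>"
      by (intro mult_left_mono) auto
  qed
  also have "\<dots> = (\<Sum>n. (1/2::real)^n) * \<delta>"
    by (rule suminf_mult2[symmetric]) (simp add: summable_geometric_iff)
  also have "\<dots> = 2 * \<delta>" by (simp add: suminf_geometric)
  finally show ?thesis .
qed

lemma metric_one: "Metric_space {0::real} (\<lambda>_ _. 0)"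
  by unfold_locales auto

lemma F_metric:
  fixes Y :: "nat \<Rightarrow> real set"
  assumes "F_class N F" "\<And>i. i \<in> {1..N} \<Longrightarrow> Metric_space (Y i) (e i)"
  shows "Metric_space (PiE {1..N} Y) (prod_metric N F e)"
  using assms unfolding F_class_def by blast

lemma F_zero:
  assumes F: "F_class N F"
  shows "F (\<lambda>i\<in>{1..N}. 0) = 0"
proof -
  have "Metric_space (PiE {1..N} (\<lambda>_. {0::real})) (prod_metric N F (\<lambda>_ _ _. 0))"
    by (rule F_metric[OF F]) (rule metric_one)
  then interpret Metric_space "PiE {1..N} (\<lambda>_. {0::real})" "prod_metric N F (\<lambda>_ _ _. 0)" .
  have "(\<lambda>i\<in>{1..N}. 0::real) \<in> PiE {1..N} (\<lambda>_. {0::real})" by auto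
  then have "prod_metric N F (\<lambda>_ _ _. 0) (\<lambda>i\<in>{1..N}. 0::real) (\<lambda>i\<in>{1..N}. 0) = 0"
    by simp
  then show ?thesis unfolding prod_metric_def by simp
qed

lemma F_nonneg:
  assumes F: "F_class N F" and t: "t \<in> PiE {1..N} (\<lambda>_. {0..})"
  shows "0 \<le> F t"
  using F t unfolding F_class_def by blast

lemma coord_emb_in: "0 \<le> r \<Longrightarrow> coord_emb N k r \<in> PiE {1..N} (\<lambda>_. {0..})"
  by (auto simp: coord_emb_def)

lemma F_cont0:
  assumes F: "F_class N F" and \<eta>: "\<eta> > 0"
  shows "\<exists>\<delta>>0. \<forall>t\<in>PiE {1..N} (\<lambda>_. {0..}). (\<forall>i\<in>{1..N}. t i < \<delta>) \<longrightarrow> F t < \<eta>"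
proof -
  let ?S = "PiE {1..N} (\<lambda>_. {0::real..})"
  let ?z = "\<lambda>i\<in>{1..N}. 0::real"
  have c: "continuous_on ?S F" using F unfolding F_class_def by blast
  have z: "?z \<in> ?S" by auto
  obtain \<delta> where \<delta>: "\<delta> > 0" "\<forall>t\<in>?S. dist t ?z < \<delta> \<longrightarrow> dist (F t) (F ?z) < \<eta>"
    using c z \<eta> unfolding continuous_on_iff by blast
  show ?thesis
  proof (intro exI[of _ "\<delta>/4"] conjI ballI impI)
    show "\<delta>/4 > 0" using \<delta> by simp
    fix t assume t: "t \<in> ?S" and small: "\<forall>i\<in>{1..N}. t i < \<delta>/4"
    have "dist (t i) (?z i) \<le> \<delta>/4" for i
    proof (cases "i \<in> {1..N}")
      case True
      then have "t i \<ge> 0" "t i < \<delta>/4" using t small by (auto simp: PiE_def Pi_def)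
      then show ?thesis using True by (simp add: dist_real_def)
    next
      case False
      then have "t i = undefined" using t by (auto simp: PiE_def extensional_def)
      then show ?thesis using False \<delta>(1) by (auto simp: restrict_def)
    qed
    then have "dist t ?z \<le> 2 * (\<delta>/4)" by (rule dist_fun_le2)
    then have "dist t ?z < \<delta>" using \<delta> by simp
    then have "dist (F t) (F ?z) < \<eta>" using \<delta> t by blast
    then show "F t < \<eta>" using F_zero[OF F] by (simp add: dist_real_def)
  qed
qed

lemma F_cont0_emb:
  assumes F: "F_class N F" and \<eta>: "\<eta> > 0"
  shows "\<exists>\<delta>>0. \<forall>r. 0 \<le> r \<and> r < \<delta> \<longrightarrow> F (coord_emb N k r) < \<eta>"
proof -
  obtain \<delta> where \<delta>: "\<delta> > 0" "\<forall>t\<in>PiE {1..N} (\<lambda>_. {0..}). (\<forall>i\<in>{1..N}. t i < \<delta>) \<longrightarrow> F t < \<eta>"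
    using F_cont0[OF F \<eta>] by blast
  show ?thesis
  proof (intro exI[of _ \<delta>] conjI allI impI)
    fix r :: real assume r: "0 \<le> r \<and> r < \<delta>"
    have "\<forall>i\<in>{1..N}. coord_emb N k r i < \<delta>" using r \<delta> by (auto simp: coord_emb_def)
    then show "F (coord_emb N k r) < \<eta>" using \<delta> coord_emb_in[of r N k] r by blast
  qed (use \<delta> in simp)
qed

lemma F_tri:
  assumes F: "F_class N F" and k: "k \<in> {1..N}" and s: "0 < s" "s \<le> 2 * D"
  shows "F (coord_emb N k s) \<le> 2 * F (coord_emb N k D)"
proof -
  have D: "D > 0" using s by simp
  define e :: "real \<Rightarrow> real \<Rightarrow> real" where
    "e x y = (if x = y then 0 else if (x = 0 \<and> y = 2) \<or> (x = 2 \<and> y = 0) then s else D)" for x y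
  have me: "Metric_space {0,1,2::real} e"
  proof
    fix x y z :: real
    show "0 \<le> e x y" using s D by (simp add: e_def)
    show "e x y = e y x" by (auto simp: e_def)
    assume "x \<in> {0,1,2}" "y \<in> {0,1,2}"
    then show "e x y = 0 \<longleftrightarrow> x = y" using s D by (auto simp: e_def)
  next
    fix x y z :: real
    assume "x \<in> {0,1,2}" "y \<in> {0,1,2}" "z \<in> {0,1,2}"
    then show "e x z \<le> e x y + e y z" using s D by (auto simp: e_def)
  qed
  define Y where "Y i = (if i = k then {0,1,2} else {0::real})" for i
  define E where "E i = (if i = k then e else (\<lambda>_ _. 0))" for i
  have "Metric_space (Y i) (E i)" for i
    using me metric_one by (simp add: Y_def E_def)
  then have "Metric_space (PiE {1..N} Y) (prod_metric N F E)"
    by (intro F_metric[OF F])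
  then interpret Metric_space "PiE {1..N} Y" "prod_metric N F E" .
  define pt where "pt c = (\<lambda>i\<in>{1..N}. if i = k then c else 0::real)" for c
  have pin: "pt c \<in> PiE {1..N} Y" if "c \<in> {0,1,2}" for c
    using that by (auto simp: pt_def Y_def)
  have tri: "prod_metric N F E (pt 0) (pt 2) \<le> prod_metric N F E (pt 0) (pt 1) + prod_metric N F E (pt 1) (pt 2)"
    by (rule triangle) (rule pin, simp)+
  have eq1: "(\<lambda>i\<in>{1..N}. E i (pt a i) (pt b i)) = coord_emb N k (e a b)" for a b
    by (auto simp: fun_eq_iff coord_emb_def pt_def E_def)
  have "e 0 2 = s" "e 0 1 = D" "e 1 2 = D" by (auto simp: e_def)
  then show ?thesis using tri unfolding prod_metric_def eq1 by simp
qed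


lemma coord_emb_0: "coord_emb N k 0 = (\<lambda>i\<in>{1..N}. 0)"
  by (auto simp: coord_emb_def fun_eq_iff)

lemma coord_key:
  fixes \<phi> :: "'a \<Rightarrow> real"
  assumes mm: "mm_space X d m" and k: "0 < \<kappa>" "\<kappa> < 1" and F: "F_class N F" and kk: "k \<in> {1..N}"
    and lip: "\<And>t s. t \<in> X \<Longrightarrow> s \<in> X \<Longrightarrow> \<bar>\<phi> t - \<phi> s\<bar> \<le> F (coord_emb N k (d t s))"
  shows "\<phi> \<in> borel_measurable m"
    and "measure m {t\<in>X. \<phi> t < lq m \<kappa> \<phi> \<or> \<phi> t > lq m \<kappa> \<phi> + 2 * F (coord_emb N k (enn2real (obs_diam X d m \<kappa>)))} \<le> 2 * \<kappa>"
proof -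
  interpret P: prob_space m using mm_prob[OF mm] .
  interpret Metric_space X d using mm_metric[OF mm] .
  have sp: "space m = X" using mm_space_eq[OF mm] .
  show fm: "\<phi> \<in> borel_measurable m"
  proof (rule mm_meas_cont[OF mm])
    fix x e assume x: "x \<in> X" and e: "(e::real) > 0"
    obtain \<delta> where \<delta>: "\<delta> > 0" "\<forall>r. 0 \<le> r \<and> r < \<delta> \<longrightarrow> F (coord_emb N k r) < e"
      using F_cont0_emb[OF F e] by blast
    show "\<exists>\<delta>>0. \<forall>y\<in>X. d x y < \<delta> \<longrightarrow> \<bar>\<phi> x - \<phi> y\<bar> < e"
    proof (intro exI[of _ \<delta>] conjI ballI impI)
      fix y assume "y \<in> X" "d x y < \<delta>"
      then show "\<bar>\<phi> x - \<phi> y\<bar> < e" using lip[OF x, of y] \<delta>(2)[rule_format, of "d x y"] by force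
    qed (use \<delta> in simp)
  qed
  define nf where "nf t = - \<phi> t" for t
  have nfm: "nf \<in> borel_measurable m" unfolding nf_def using fm by measurable
  define D where "D = enn2real (obs_diam X d m \<kappa>)"
  define G where "G = F (coord_emb N k D)"
  define l where "l = lq m \<kappa> \<phi>"
  define u where "u = - lq m \<kappa> nf"
  have D0: "D \<ge> 0" unfolding D_def by simp
  have G0: "G \<ge> 0" unfolding G_def by (rule F_nonneg[OF F coord_emb_in[OF D0]])
  have ul: "u \<le> l + 2 * G"
  proof (rule ccontr)
    assume "\<not> u \<le> l + 2 * G"
    define gap where "gap = u - l - 2 * G"
    have gap: "gap > 0" using \<open>\<not> u \<le> l + 2 * G\<close> unfolding gap_def by simp
    define \<epsilon> where "\<epsilon> = gap / 8"
    have \<epsilon>: "\<epsilon> > 0" using gap unfolding \<epsilon>_def by simp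
    define B0 where "B0 = {t\<in>space m. \<phi> t \<le> l + \<epsilon>}"
    define B1 where "B1 = {t\<in>space m. nf t \<le> lq m \<kappa> nf + \<epsilon>}"
    have B0: "B0 \<in> sets m" "measure m B0 > \<kappa>"
      unfolding B0_def l_def using lq_sets[OF fm] lq_upper[OF P.prob_space_axioms fm k \<epsilon>] by auto
    have B1: "B1 \<in> sets m" "measure m B1 > \<kappa>"
      unfolding B1_def using lq_sets[OF nfm] lq_upper[OF P.prob_space_axioms nfm k \<epsilon>] by auto
    have bound: "\<exists>a\<in>B0. \<exists>b\<in>B1. F (coord_emb N k (d a b)) \<le> 2 * G + gap / 2"
    proof (cases "D > 0")
      case True
      obtain a b where ab: "a \<in> B0" "b \<in> B1" "d a b < D + D"
        using sep[OF mm k(1) B0 B1 True] unfolding D_def by blast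
      have "F (coord_emb N k (d a b)) \<le> 2 * G"
      proof (cases "d a b > 0")
        case True
        then show ?thesis unfolding G_def using F_tri[OF F kk True, of D] ab by simp
      next
        case False
        then have "d a b = 0" using nonneg[of a b] by linarith
        then show ?thesis using F_zero[OF F] G0 by (simp add: coord_emb_0)
      qed
      then show ?thesis using ab gap by force
    next
      case False
      then have "D = 0" using D0 by simp
      then have G00: "G = 0" unfolding G_def using F_zero[OF F] by (simp add: coord_emb_0)
      have hg: "gap / 2 > 0" using gap by simp
      obtain \<delta> where \<delta>: "\<delta> > 0" "\<forall>r. 0 \<le> r \<and> r < \<delta> \<longrightarrow> F (coord_emb N k r) < gap / 2"
        using F_cont0_emb[OF F hg] by blast
      obtain a b where ab: "a \<in> B0" "b \<in> B1" "d a b < D + \<delta>"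
        using sep[OF mm k(1) B0 B1 \<delta>(1)] unfolding D_def by blast
      have "F (coord_emb N k (d a b)) < gap / 2"
        using \<delta>(2) ab \<open>D = 0\<close> nonneg[of a b] by simp
      then show ?thesis using ab G00 by force
    qed
    then obtain a b where ab: "a \<in> B0" "b \<in> B1" and Fab: "F (coord_emb N k (d a b)) \<le> 2 * G + gap / 2"
      by blast
    have aX: "a \<in> X" "b \<in> X" using ab sp unfolding B0_def B1_def by auto
    have "\<phi> a \<le> l + \<epsilon>" using ab unfolding B0_def by simp
    moreover have "\<phi> b \<ge> u - \<epsilon>" using ab unfolding B1_def u_def nf_def by simp
    moreover have "\<bar>\<phi> a - \<phi> b\<bar> \<le> F (coord_emb N k (d a b))" using lip aX by blast
    ultimately have "u - l - 2 * \<epsilon> \<le> 2 * G + gap / 2" using Fab by linarith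
    then have "3 * gap \<le> 2 * gap" unfolding \<epsilon>_def gap_def by (simp add: field_simps)
    then show False using gap by linarith
  qed
  have sub: "{t\<in>X. \<phi> t < l \<or> \<phi> t > l + 2 * G} \<subseteq> {t\<in>space m. \<phi> t < l} \<union> {t\<in>space m. nf t < lq m \<kappa> nf}"
    using ul sp unfolding u_def nf_def by auto
  have "measure m {t\<in>X. \<phi> t < l \<or> \<phi> t > l + 2 * G} \<le> measure m ({t\<in>space m. \<phi> t < l} \<union> {t\<in>space m. nf t < lq m \<kappa> nf})"
    by (rule P.finite_measure_mono[OF sub]) (use lq_sets[OF fm] lq_sets[OF nfm] in auto)
  also have "\<dots> \<le> measure m {t\<in>space m. \<phi> t < l} + measure m {t\<in>space m. nf t < lq m \<kappa> nf}"
    by (rule measure_Un_le) (use lq_sets[OF fm] lq_sets[OF nfm] in auto)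
  also have "\<dots> \<le> \<kappa> + \<kappa>"
    using lq_lower[OF P.prob_space_axioms fm k] lq_lower[OF P.prob_space_axioms nfm k]
    unfolding l_def by linarith
  finally show "measure m {t\<in>X. \<phi> t < lq m \<kappa> \<phi> \<or> \<phi> t > lq m \<kappa> \<phi> + 2 * F (coord_emb N k (enn2real (obs_diam X d m \<kappa>)))} \<le> 2 * \<kappa>"
    unfolding l_def G_def D_def by simp
qed


lemma mm_dense:
  assumes mm: "mm_space X d m"
  shows "\<exists>C. countable C \<and> C \<subseteq> X \<and> (\<forall>x\<in>X. \<forall>r>0. \<exists>c\<in>C. d c x < r)"
proof -
  interpret Metric_space X d using mm_metric[OF mm] .
  have "separable_space mtopology" using mm by (simp add: mm_space_def)
  then obtain C where C: "countable C" "C \<subseteq> X" "mtopology closure_of C = X"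
    unfolding separable_space_def by auto
  have "\<forall>x\<in>X. \<forall>r>0. \<exists>c\<in>C. d c x < r"
  proof (intro ballI allI impI)
    fix x r assume "x \<in> X" "(r::real) > 0"
    then have "x \<in> mtopology closure_of C" using C by simp
    then obtain y where "y \<in> C" "y \<in> mball x r" using \<open>r > 0\<close> unfolding metric_closure_of by blast
    then show "\<exists>c\<in>C. d c x < r" using commute by auto
  qed
  then show ?thesis using C by blast
qed

lemma prod_space:
  assumes mm: "\<And>i. i \<in> {1..N} \<Longrightarrow> mm_space (X i) (d i) (m i)"
  shows "space (PiM {1..N} m) = PiE {1..N} X"
  unfolding space_PiM using mm_space_eq[OF mm] by (intro PiE_cong) auto

lemma prod_meas:
  fixes h :: "(nat \<Rightarrow> 'a) \<Rightarrow> real"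
  assumes mm: "\<And>i. i \<in> {1..N} \<Longrightarrow> mm_space (X i) (d i) (m i)"
   and c: "\<And>x e. x \<in> PiE {1..N} X \<Longrightarrow> e > 0 \<Longrightarrow>
      \<exists>\<delta>>0. \<forall>y\<in>PiE {1..N} X. (\<forall>i\<in>{1..N}. d i (x i) (y i) < \<delta>) \<longrightarrow> \<bar>h x - h y\<bar> < e"
  shows "h \<in> borel_measurable (PiM {1..N} m)"
proof (rule borel_measurableI)
  fix S :: "real set" assume S: "open S"
  have sp: "space (PiM {1..N} m) = PiE {1..N} X" by (rule prod_space[OF mm])
  have "\<forall>i\<in>{1..N}. \<exists>C. countable C \<and> C \<subseteq> X i \<and> (\<forall>x\<in>X i. \<forall>r>0. \<exists>c\<in>C. d i c x < r)"
    using mm_dense[OF mm] by blast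
  then obtain C where C: "\<And>i. i \<in> {1..N} \<Longrightarrow> countable (C i) \<and> C i \<subseteq> X i \<and> (\<forall>x\<in>X i. \<forall>r>0. \<exists>c\<in>C i. d i c x < r)"
    by metis
  define box where "box c n = PiE {1..N} (\<lambda>i. {y \<in> X i. d i (c i) y < 1 / real (Suc n)})" for c n
  define fam where "fam = {box c n |c n. c \<in> PiE {1..N} C \<and> box c n \<subseteq> h -` S \<inter> PiE {1..N} X}"
  have cnt: "countable fam"
  proof -
    have "fam \<subseteq> (\<lambda>(c, n). box c n) ` (PiE {1..N} C \<times> UNIV)" unfolding fam_def by auto
    moreover have "countable (PiE {1..N} C \<times> (UNIV :: nat set))"
      using C by (intro countable_SIGMA countable_PiE) auto
    ultimately show ?thesis by (meson countable_image countable_subset)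
  qed
  have boxs: "box c n \<in> sets (PiM {1..N} m)" if "c \<in> PiE {1..N} C" for c n
    unfolding box_def
  proof (rule sets_PiM_I_finite)
    fix i assume i: "i \<in> {1..N}"
    interpret Metric_space "X i" "d i" using mm_metric[OF mm[OF i]] .
    have ci: "c i \<in> X i" using that C[OF i] i by auto
    have "{y \<in> X i. d i (c i) y < 1 / real (Suc n)} = mball (c i) (1 / real (Suc n))"
      using ci by auto
    moreover have "openin mtopology (mball (c i) (1 / real (Suc n)))" by simp
    ultimately show "{y \<in> X i. d i (c i) y < 1 / real (Suc n)} \<in> sets (m i)"
      using mm[OF i] by (auto simp: mm_space_def intro: sigma_sets.Basic)
  qed simp
  have eq: "h -` S \<inter> PiE {1..N} X = \<Union>fam"
  proof
    show "\<Union>fam \<subseteq> h -` S \<inter> PiE {1..N} X" unfolding fam_def by auto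
  next
    show "h -` S \<inter> PiE {1..N} X \<subseteq> \<Union>fam"
    proof
      fix x assume x: "x \<in> h -` S \<inter> PiE {1..N} X"
      then obtain e where e: "e > 0" "ball (h x) e \<subseteq> S"
        using S open_contains_ball by blast
      obtain \<delta> where \<delta>: "\<delta> > 0" "\<forall>y\<in>PiE {1..N} X. (\<forall>i\<in>{1..N}. d i (x i) (y i) < \<delta>) \<longrightarrow> \<bar>h x - h y\<bar> < e"
        using c[of x e] x e by auto
      obtain n :: nat where n: "inverse (real (Suc n)) < \<delta> / 2" using reals_Archimedean \<delta>(1)
        by (metis half_gt_zero)
      have n': "1 / real (Suc n) < \<delta> / 2" using n by (simp add: inverse_eq_divide)
      have "\<forall>i\<in>{1..N}. \<exists>ci\<in>C i. d i ci (x i) < 1 / real (Suc n)"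
        using C x by (auto simp: PiE_def Pi_def)
      then obtain c0 where c0: "\<And>i. i \<in> {1..N} \<Longrightarrow> c0 i \<in> C i \<and> d i (c0 i) (x i) < 1 / real (Suc n)"
        by metis
      define c where "c = restrict c0 {1..N}"
      have cC: "c \<in> PiE {1..N} C" using c0 unfolding c_def by auto
      have xb: "x \<in> box c n" using x c0 unfolding box_def c_def by (auto simp: PiE_def Pi_def)
      have bsub: "box c n \<subseteq> h -` S \<inter> PiE {1..N} X"
      proof
        fix y assume y: "y \<in> box c n"
        have yX: "y \<in> PiE {1..N} X" using y unfolding box_def by (auto simp: PiE_def Pi_def)
        have "d i (x i) (y i) < \<delta>" if i: "i \<in> {1..N}" for i
        proof -
          interpret Metric_space "X i" "d i" using mm_metric[OF mm[OF i]] .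
          have ci: "c i \<in> X i" "c i = c0 i" using cC C[OF i] i unfolding c_def by auto
          have xi: "x i \<in> X i" using x i by auto
          have yi: "y i \<in> X i" "d i (c i) (y i) < 1 / real (Suc n)" using y i unfolding box_def by auto
          have "d i (x i) (y i) \<le> d i (x i) (c i) + d i (c i) (y i)" using triangle xi ci yi by blast
          moreover have "d i (x i) (c i) < 1 / real (Suc n)" using c0[OF i] ci commute by simp
          ultimately show ?thesis using yi n' by linarith
        qed
        then have "\<bar>h x - h y\<bar> < e" using \<delta>(2) yX by blast
        then have "h y \<in> S" using e by (auto simp: dist_real_def)
        then show "y \<in> h -` S \<inter> PiE {1..N} X" using yX by simp
      qed
      show "x \<in> \<Union>fam" using xb bsub cC unfolding fam_def by blast
    qed
  qed
  have "\<Union>fam \<in> sets (PiM {1..N} m)"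
    by (rule sets.countable_Union[OF cnt]) (use boxs in \<open>auto simp: fam_def\<close>)
  then show "h -` S \<inter> space (PiM {1..N} m) \<in> sets (PiM {1..N} m)" using eq sp by simp
qed


lemma fubini_bound:
  assumes P: "\<And>i. prob_space (M i)" and I: "finite I" and k: "k \<in> I"
    and E: "E \<in> sets (PiM I M)"
    and sec: "\<And>x. x \<in> space (PiM I M) \<Longrightarrow> emeasure (M k) {t\<in>space (M k). x(k:=t) \<in> E} \<le> ennreal c"
  shows "emeasure (PiM I M) E \<le> ennreal c"
proof -
  interpret product_sigma_finite M
    by (rule product_sigma_finite.intro) (rule prob_space_imp_sigma_finite[OF P])
  define J where "J = I - {k}"
  have IJ: "I = insert k J" "k \<notin> J" "finite J" using k I unfolding J_def by auto
  have "emeasure (PiM I M) E = (\<integral>\<^sup>+ x. indicator E x \<partial>PiM I M)"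
    using E by simp
  also have "\<dots> = (\<integral>\<^sup>+ x. (\<integral>\<^sup>+ y. indicator E (x(k := y)) \<partial>(M k)) \<partial>(PiM J M))"
    unfolding IJ(1) by (rule product_nn_integral_insert[OF IJ(3) IJ(2)]) (use E IJ in simp)
  also have "\<dots> \<le> (\<integral>\<^sup>+ x. ennreal c \<partial>(PiM J M))"
  proof (rule nn_integral_mono)
    fix x assume x: "x \<in> space (PiM J M)"
    have upd: "(\<lambda>v. x(k := v)) \<in> measurable (M k) (PiM (insert k J) M)"
      by (rule measurable_component_update[OF x IJ(2)])
    have Ss: "{t\<in>space (M k). x(k:=t) \<in> E} \<in> sets (M k)"
    proof -
      have "(\<lambda>v. x(k := v)) -` E \<inter> space (M k) \<in> sets (M k)"
        by (rule measurable_sets[OF upd]) (use E IJ in simp)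
      moreover have "(\<lambda>v. x(k := v)) -` E \<inter> space (M k) = {t\<in>space (M k). x(k:=t) \<in> E}" by auto
      ultimately show ?thesis by simp
    qed
    have "(\<integral>\<^sup>+ y. indicator E (x(k := y)) \<partial>(M k)) = (\<integral>\<^sup>+ y. indicator {t\<in>space (M k). x(k:=t) \<in> E} y \<partial>(M k))"
      by (rule nn_integral_cong) (auto simp: indicator_def)
    also have "\<dots> = emeasure (M k) {t\<in>space (M k). x(k:=t) \<in> E}"
      by (rule nn_integral_indicator[OF Ss])
    also have "\<dots> \<le> ennreal c"
    proof -
      interpret Pk: prob_space "M k" by (rule P)
      obtain t0 where t0: "t0 \<in> space (M k)" using Pk.not_empty by auto
      have x': "x(k := t0) \<in> space (PiM I M)"
        using x t0 IJ unfolding space_PiM by (auto simp: PiE_def Pi_def extensional_def)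
      have "{t\<in>space (M k). (x(k:=t0))(k:=t) \<in> E} = {t\<in>space (M k). x(k:=t) \<in> E}" by simp
      then show ?thesis using sec[OF x'] by simp
    qed
    finally show "(\<integral>\<^sup>+ y. indicator E (x(k := y)) \<partial>(M k)) \<le> ennreal c" .
  qed
  also have "\<dots> = ennreal c"
  proof -
    interpret PJ: prob_space "PiM J M" by (rule prob_space_PiM) (use P in simp)
    show ?thesis by (simp add: PJ.emeasure_space_1)
  qed
  finally show ?thesis .
qed


primrec gq :: "(nat \<Rightarrow> 'a measure) \<Rightarrow> (nat \<Rightarrow> real) \<Rightarrow> ((nat \<Rightarrow> 'a) \<Rightarrow> real) \<Rightarrow> nat \<Rightarrow> (nat \<Rightarrow> 'a) \<Rightarrow> real" where
  "gq m \<kappa> f 0 = f"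
| "gq m \<kappa> f (Suc k) = (\<lambda>x. lq (m (Suc k)) (\<kappa> (Suc k)) (\<lambda>t. gq m \<kappa> f k (x(Suc k := t))))"

definition vec :: "nat \<Rightarrow> (nat \<Rightarrow> 'a \<Rightarrow> 'a \<Rightarrow> real) \<Rightarrow> nat \<Rightarrow> (nat \<Rightarrow> 'a) \<Rightarrow> (nat \<Rightarrow> 'a) \<Rightarrow> nat \<Rightarrow> real" where
  "vec N d k x y = (\<lambda>i\<in>{1..N}. if i \<le> k then 0 else d i (x i) (y i))"

lemma main_bound:
  fixes f :: "(nat \<Rightarrow> 'a) \<Rightarrow> real"
  assumes N: "N \<ge> 1" and F: "F_class N F"
    and mm: "\<And>i. i \<in> {1..N} \<Longrightarrow> mm_space (X i) (d i) (m i)"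
    and \<kappa>: "\<And>i. i \<in> {1..N} \<Longrightarrow> 0 < \<kappa> i \<and> \<kappa> i < 1"
    and l: "lipschitz1 (PiE {1..N} X) (prod_metric N F d) f"
  shows "partial_diam (distr (PiM {1..N} m) borel f) (1 - 2 * (\<Sum>i=1..N. \<kappa> i))
     \<le> ennreal (\<Sum>i=1..N. 2 * F (coord_emb N i (enn2real (obs_diam (X i) (d i) (m i) (\<kappa> i)))))"
proof -
  define P where "P = PiE {1..N} X"
  define g where "g = gq m \<kappa> f"
  have dself: "d i a a = 0" if "i \<in> {1..N}" "a \<in> X i" for i a
  proof -
    interpret Metric_space "X i" "d i" using mm_metric[OF mm[OF that(1)]] .
    show ?thesis using that by simp
  qed
  have dnn: "d i a b \<ge> 0" if "i \<in> {1..N}" for i a b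
  proof -
    interpret Metric_space "X i" "d i" using mm_metric[OF mm[OF that(1)]] .
    show ?thesis by simp
  qed
  have upd: "x(k := t) \<in> P" if "x \<in> P" "k \<in> {1..N}" "t \<in> X k" for x k t
    using that unfolding P_def by (auto simp: PiE_def Pi_def extensional_def)
  have vec_nn: "vec N d k x y \<in> PiE {1..N} (\<lambda>_. {0..})" for k x y
    using dnn unfolding vec_def by auto
  have sp: "\<And>i. i \<in> {1..N} \<Longrightarrow> space (m i) = X i" using mm mm_space_eq by blast
  have Pm: "\<And>i. i \<in> {1..N} \<Longrightarrow> prob_space (m i)" using mm mm_prob by blast
  have lipg: "\<forall>x\<in>P. \<forall>y\<in>P. \<bar>g k x - g k y\<bar> \<le> F (vec N d k x y)" if "k \<le> N" for k
    using that
  proof (induction k)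
    case 0
    have v0: "vec N d 0 x y = (\<lambda>i\<in>{1..N}. d i (x i) (y i))" for x y
      unfolding vec_def by (auto simp: fun_eq_iff)
    show ?case
    proof (intro ballI)
      fix x y assume "x \<in> P" "y \<in> P"
      then have "\<bar>f x - f y\<bar> \<le> prod_metric N F d x y" using l unfolding lipschitz1_def P_def by blast
      then show "\<bar>g 0 x - g 0 y\<bar> \<le> F (vec N d 0 x y)" unfolding prod_metric_def g_def v0 by simp
    qed
  next
    case (Suc k)
    define K where "K = Suc k"
    have K: "K \<in> {1..N}" using Suc.prems unfolding K_def by simp
    have IH: "\<forall>x\<in>P. \<forall>y\<in>P. \<bar>g k x - g k y\<bar> \<le> F (vec N d k x y)" using Suc by simp
    have lipphi: "\<bar>g k (x(K:=t)) - g k (x(K:=s))\<bar> \<le> F (coord_emb N K (d K t s))"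
      if x: "x \<in> P" and ts: "t \<in> X K" "s \<in> X K" for x t s
    proof -
      have "vec N d k (x(K:=t)) (x(K:=s)) = coord_emb N K (d K t s)"
        unfolding vec_def coord_emb_def fun_eq_iff
      proof (intro allI)
        fix i show "(\<lambda>i\<in>{1..N}. if i \<le> k then 0 else d i ((x(K := t)) i) ((x(K := s)) i)) i =
             (\<lambda>j\<in>{1..N}. if j = K then d K t s else 0) i"
        proof (cases "i \<in> {1..N}")
          case True
          then have "x i \<in> X i" using x unfolding P_def by auto
          then show ?thesis using True dself[OF True] unfolding K_def by auto
        qed auto
      qed
      then show ?thesis using IH upd[OF x K ts(1)] upd[OF x K ts(2)] by metis
    qed
    have phim: "(\<lambda>t. g k (x(K:=t))) \<in> borel_measurable (m K)" if x: "x \<in> P" for x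
      by (rule coord_key(1)[OF mm[OF K] _ _ F K]) (use \<kappa>[OF K] lipphi[OF x] in auto)
    show ?case
    proof (intro ballI)
      fix x y assume x: "x \<in> P" and y: "y \<in> P"
      define c where "c = F (vec N d K x y)"
      have c: "\<bar>g k (x(K:=t)) - g k (y(K:=t))\<bar> \<le> c" if t: "t \<in> X K" for t
      proof -
        have "vec N d k (x(K:=t)) (y(K:=t)) = vec N d K x y"
          unfolding vec_def fun_eq_iff
        proof (intro allI)
          fix i show "(\<lambda>i\<in>{1..N}. if i \<le> k then 0 else d i ((x(K := t)) i) ((y(K := t)) i)) i =
              (\<lambda>i\<in>{1..N}. if i \<le> K then 0 else d i (x i) (y i)) i"
            using dself[OF K t] unfolding K_def by (cases "i = Suc k") auto
        qed
        then show ?thesis using IH upd[OF x K t] upd[OF y K t] unfolding c_def by metis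
      qed
      have gK: "g K z = lq (m K) (\<kappa> K) (\<lambda>t. g k (z(K:=t)))" for z
        unfolding g_def K_def by simp
      have c1: "g k (y(K:=t)) \<le> g k (x(K:=t)) + c" "g k (x(K:=t)) \<le> g k (y(K:=t)) + c"
        if "t \<in> space (m K)" for t
      proof -
        have "t \<in> X K" using that sp[OF K] by simp
        from c[OF this] show "g k (y(K:=t)) \<le> g k (x(K:=t)) + c" "g k (x(K:=t)) \<le> g k (y(K:=t)) + c"
          by (simp_all add: abs_le_iff)
      qed
      have k01: "0 < \<kappa> K" "\<kappa> K < 1" using \<kappa>[OF K] by auto
      have "g K y \<le> g K x + c"
        unfolding gK by (rule lq_shift[OF Pm[OF K] phim[OF x] phim[OF y] k01 c1(1)])
      moreover have "g K x \<le> g K y + c"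
        unfolding gK by (rule lq_shift[OF Pm[OF K] phim[OF y] phim[OF x] k01 c1(2)])
      ultimately show "\<bar>g (Suc k) x - g (Suc k) y\<bar> \<le> F (vec N d (Suc k) x y)"
        unfolding c_def K_def by linarith
    qed
  qed
  have F0: "F (\<lambda>i\<in>{1..N}. 0) = 0" by (rule F_zero[OF F])
  have inv: "g k (x(k:=t)) = g k x" if k: "k \<in> {1..N}" and x: "x \<in> P" and t: "t \<in> X k" for k x t
  proof -
    have "vec N d k (x(k:=t)) x = (\<lambda>i\<in>{1..N}. 0)"
      unfolding vec_def fun_eq_iff
    proof (intro allI)
      fix i show "(\<lambda>i\<in>{1..N}. if i \<le> k then 0 else d i ((x(k := t)) i) (x i)) i = (\<lambda>i\<in>{1..N}. 0) i"
      proof (cases "i \<in> {1..N}")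
        case True
        then have "x i \<in> X i" using x unfolding P_def by auto
        then show ?thesis using True dself[OF True] by auto
      qed auto
    qed
    then show ?thesis using lipg[of k] k upd[OF x k t] x F0 by force
  qed
  have gconst: "g N x = g N y" if "x \<in> P" "y \<in> P" for x y
  proof -
    have "vec N d N x y = (\<lambda>i\<in>{1..N}. 0)" unfolding vec_def by (auto simp: fun_eq_iff)
    then show ?thesis using lipg[of N] that F0 by force
  qed
  have spP: "space (PiM {1..N} m) = P" unfolding P_def by (rule prod_space[OF mm])
  have gm: "g k \<in> borel_measurable (PiM {1..N} m)" if "k \<le> N" for k
  proof (rule prod_meas[OF mm])
    fix x e assume x: "x \<in> PiE {1..N} X" and e: "(e::real) > 0"
    obtain \<delta> where \<delta>: "\<delta> > 0" "\<forall>t\<in>PiE {1..N} (\<lambda>_. {0..}). (\<forall>i\<in>{1..N}. t i < \<delta>) \<longrightarrow> F t < e"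
      using F_cont0[OF F e] by blast
    show "\<exists>\<delta>>0. \<forall>y\<in>PiE {1..N} X. (\<forall>i\<in>{1..N}. d i (x i) (y i) < \<delta>) \<longrightarrow> \<bar>g k x - g k y\<bar> < e"
    proof (intro exI[of _ \<delta>] conjI ballI impI)
      fix y assume y: "y \<in> PiE {1..N} X" and close: "\<forall>i\<in>{1..N}. d i (x i) (y i) < \<delta>"
      have "\<forall>i\<in>{1..N}. vec N d k x y i < \<delta>" using close \<delta>(1) unfolding vec_def by auto
      then have "F (vec N d k x y) < e" using \<delta>(2) vec_nn by blast
      then show "\<bar>g k x - g k y\<bar> < e" using lipg[OF that] x y unfolding P_def by force
    qed (use \<delta> in simp)
  qed
  define D where "D i = enn2real (obs_diam (X i) (d i) (m i) (\<kappa> i))" for i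
  define G where "G i = F (coord_emb N i (D i))" for i
  have G0: "G i \<ge> 0" for i
    unfolding G_def by (rule F_nonneg[OF F coord_emb_in]) (simp add: D_def)
  define E where "E k = {x\<in>P. g (k - 1) x < g k x \<or> g (k - 1) x > g k x + 2 * G k}" for k
  have Es: "E k \<in> sets (PiM {1..N} m)" if k: "k \<in> {1..N}" for k
  proof -
    have m1: "g (k - 1) \<in> borel_measurable (PiM {1..N} m)" by (rule gm) (use k in auto)
    have m2: "g k \<in> borel_measurable (PiM {1..N} m)" using gm k by simp
    have "{x\<in>space (PiM {1..N} m). g (k - 1) x < g k x \<or> g (k - 1) x > g k x + 2 * G k} \<in> sets (PiM {1..N} m)"
      using m1 m2 by measurable
    then show ?thesis unfolding E_def spP .
  qed
  define m' where "m' i = (if i \<in> {1..N} then m i else m 1)" for i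
  have Pm': "prob_space (m' i)" for i
    unfolding m'_def using Pm N by auto
  have PiMeq: "PiM {1..N} m' = PiM {1..N} m" by (rule PiM_cong) (auto simp: m'_def)
  interpret PP: prob_space "PiM {1..N} m" by (rule prob_space_PiM) (use Pm in simp)
  have Em: "measure (PiM {1..N} m) (E k) \<le> 2 * \<kappa> k" if k: "k \<in> {1..N}" for k
  proof -
    have "emeasure (PiM {1..N} m') (E k) \<le> ennreal (2 * \<kappa> k)"
    proof (rule fubini_bound[OF Pm' _ k])
      show "E k \<in> sets (PiM {1..N} m')" using Es[OF k] PiMeq by simp
      fix x assume "x \<in> space (PiM {1..N} m')"
      then have x: "x \<in> P" using spP PiMeq by simp
      define k0 where "k0 = k - 1"
      have kk: "k = Suc k0" using k unfolding k0_def by auto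
      define \<phi> where "\<phi> t = g k0 (x(k:=t))" for t
      have gk: "g k z = lq (m k) (\<kappa> k) (\<lambda>t. g k0 (z(k:=t)))" for z
        unfolding g_def kk by simp
      have lipphi: "\<bar>\<phi> t - \<phi> s\<bar> \<le> F (coord_emb N k (d k t s))" if ts: "t \<in> X k" "s \<in> X k" for t s
      proof -
        have "vec N d k0 (x(k:=t)) (x(k:=s)) = coord_emb N k (d k t s)"
          unfolding vec_def coord_emb_def fun_eq_iff
        proof (intro allI)
          fix i show "(\<lambda>i\<in>{1..N}. if i \<le> k0 then 0 else d i ((x(k := t)) i) ((x(k := s)) i)) i =
               (\<lambda>j\<in>{1..N}. if j = k then d k t s else 0) i"
          proof (cases "i \<in> {1..N}")
            case True
            then have "x i \<in> X i" using x unfolding P_def by auto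
            then show ?thesis using True dself[OF True] unfolding kk by auto
          qed auto
        qed
        moreover have "k0 \<le> N" using k kk by simp
        ultimately show ?thesis using lipg[of k0] upd[OF x k ts(1)] upd[OF x k ts(2)] unfolding \<phi>_def by metis
      qed
      have key: "measure (m k) {t\<in>X k. \<phi> t < lq (m k) (\<kappa> k) \<phi> \<or> \<phi> t > lq (m k) (\<kappa> k) \<phi> + 2 * G k} \<le> 2 * \<kappa> k"
        using coord_key(2)[OF mm[OF k] _ _ F k lipphi] \<kappa>[OF k] unfolding G_def D_def by auto
      have seteq: "{t\<in>space (m' k). x(k:=t) \<in> E k} = {t\<in>X k. \<phi> t < lq (m k) (\<kappa> k) \<phi> \<or> \<phi> t > lq (m k) (\<kappa> k) \<phi> + 2 * G k}"
      proof -
        have "g k (x(k:=t)) = lq (m k) (\<kappa> k) \<phi>" if "t \<in> X k" for t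
          using inv[OF k x that] gk[of x] unfolding \<phi>_def by simp
        moreover have "g (k - 1) (x(k:=t)) = \<phi> t" for t unfolding \<phi>_def k0_def ..
        ultimately show ?thesis using upd[OF x k] sp[OF k] k unfolding E_def m'_def by auto
      qed
      interpret Pk: prob_space "m k" using Pm[OF k] .
      show "emeasure (m' k) {t\<in>space (m' k). x(k:=t) \<in> E k} \<le> ennreal (2 * \<kappa> k)"
        unfolding seteq using ennreal_leI[OF key] k by (simp add: m'_def Pk.emeasure_eq_measure)
    qed simp
    then have "emeasure (PiM {1..N} m) (E k) \<le> ennreal (2 * \<kappa> k)" using PiMeq by simp
    then have "ennreal (measure (PiM {1..N} m) (E k)) \<le> ennreal (2 * \<kappa> k)"
      using PP.emeasure_eq_measure[of "E k"] by simp
    then show ?thesis using \<kappa>[OF k] ennreal_le_iff[of "2 * \<kappa> k"] by simp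
  qed
  define S where "S = (\<Sum>i=1..N. 2 * G i)"
  have S0: "S \<ge> 0" unfolding S_def using G0 by (simp add: sum_nonneg)
  have "P \<noteq> {}"
  proof -
    have "X i \<noteq> {}" if "i \<in> {1..N}" for i
      using prob_space.not_empty[OF Pm[OF that]] sp[OF that] by simp
    then show ?thesis unfolding P_def by (simp add: PiE_eq_empty_iff)
  qed
  then obtain x0 where x0: "x0 \<in> P" by auto
  define c0 where "c0 = g N x0"
  define Gd where "Gd = P - (\<Union>k\<in>{1..N}. E k)"
  have tele: "g 0 x \<le> g j x + (\<Sum>i=1..j. 2 * G i) \<and> g j x \<le> g 0 x" if x: "x \<in> Gd" and j: "j \<le> N" for x j
    using j
  proof (induction j)
    case 0 then show ?case by simp
  next
    case (Suc j)
    have k: "Suc j \<in> {1..N}" using Suc.prems by simp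
    have "x \<notin> E (Suc j)" "x \<in> P" using x k unfolding Gd_def by auto
    then have "g (Suc j) x \<le> g j x" "g j x \<le> g (Suc j) x + 2 * G (Suc j)"
      unfolding E_def by auto
    then show ?case using Suc by simp
  qed
  have fA: "f x \<in> {c0..c0 + S}" if x: "x \<in> Gd" for x
  proof -
    have "x \<in> P" using x unfolding Gd_def by auto
    then have "g N x = c0" unfolding c0_def using gconst x0 by blast
    then show ?thesis using tele[OF x order_refl] unfolding S_def g_def by simp
  qed
  have fm: "f \<in> borel_measurable (PiM {1..N} m)" using gm[of 0] unfolding g_def by simp
  have "(\<Union>k\<in>{1..N}. E k) \<in> sets (PiM {1..N} m)" by (rule sets.finite_UN) (use Es in auto)
  then have Gds: "Gd \<in> sets (PiM {1..N} m)"
    unfolding Gd_def spP[symmetric] by (rule sets.compl_sets)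
  have "measure (PiM {1..N} m) (\<Union>k\<in>{1..N}. E k) \<le> (\<Sum>k=1..N. measure (PiM {1..N} m) (E k))"
    by (rule PP.finite_measure_subadditive_finite) (use Es in auto)
  also have "\<dots> \<le> (\<Sum>k=1..N. 2 * \<kappa> k)" by (rule sum_mono) (rule Em)
  finally have U: "measure (PiM {1..N} m) (\<Union>k\<in>{1..N}. E k) \<le> 2 * (\<Sum>k=1..N. \<kappa> k)"
    by (simp add: sum_distrib_left)
  have "measure (PiM {1..N} m) Gd = 1 - measure (PiM {1..N} m) (\<Union>k\<in>{1..N}. E k)"
    unfolding Gd_def spP[symmetric] by (rule PP.prob_compl) (use Es in auto)
  with U have Gdm: "measure (PiM {1..N} m) Gd \<ge> 1 - 2 * (\<Sum>k=1..N. \<kappa> k)" by linarith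
  have "Gd \<subseteq> f -` {c0..c0 + S} \<inter> space (PiM {1..N} m)"
    using fA spP unfolding Gd_def by auto
  then have "measure (PiM {1..N} m) Gd \<le> measure (PiM {1..N} m) (f -` {c0..c0 + S} \<inter> space (PiM {1..N} m))"
    by (intro PP.finite_measure_mono) (use fm in measurable)
  with Gdm have "partial_diam (distr (PiM {1..N} m) borel f) (1 - 2 * (\<Sum>i=1..N. \<kappa> i)) \<le> ediam {c0..c0 + S}"
    by (intro pd_le[OF fm]) auto
  also have "\<dots> \<le> ennreal S" using ediam_interval[of c0 "c0 + S"] S0 by simp
  finally show ?thesis unfolding S_def G_def D_def .
qed


theorem mainTheorem11:
  fixes N :: nat and F :: "(nat \<Rightarrow> real) \<Rightarrow> real"
    and X :: "nat \<Rightarrow> 'a set" and d :: "nat \<Rightarrow> 'a \<Rightarrow> 'a \<Rightarrow> real"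
    and m :: "nat \<Rightarrow> 'a measure" and \<kappa> :: "nat \<Rightarrow> real"
  assumes "N \<ge> 1"
    and "F_class N F"
    and "\<And>i. i \<in> {1..N} \<Longrightarrow> mm_space (X i) (d i) (m i)"
    and "0 < \<kappa> 1" and "\<kappa> 1 < 1"
    and "\<And>i. i \<in> {2..N} \<Longrightarrow> 0 < \<kappa> i \<and> \<kappa> i < 1/4"
  shows "obs_diam (PiE {1..N} X) (prod_metric N F d) (PiM {1..N} m) (2 * (\<Sum>i=1..N. \<kappa> i))
     \<le> 4 * ennreal (F (coord_emb N 1 (enn2real (obs_diam (X 1) (d 1) (m 1) (\<kappa> 1)))))
       + 8 * (\<Sum>i=2..N. ennreal (F (coord_emb N i (enn2real (obs_diam (X i) (d i) (m i) (\<kappa> i))))))"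
proof -
  note N = assms(1) and F = assms(2) and mm = assms(3)
  have \<kappa>: "0 < \<kappa> i \<and> \<kappa> i < 1" if i: "i \<in> {1..N}" for i
  proof (cases "i = 1")
    case True then show ?thesis using assms(4,5) by simp
  next
    case False then have "i \<in> {2..N}" using i by auto
    then show ?thesis using assms(6)[of i] by simp
  qed
  define G where "G i = F (coord_emb N i (enn2real (obs_diam (X i) (d i) (m i) (\<kappa> i))))" for i
  have G0: "G i \<ge> 0" for i
    unfolding G_def by (rule F_nonneg[OF F coord_emb_in]) simp
  have bound: "ennreal (\<Sum>i=1..N. 2 * G i) \<le> 4 * ennreal (G 1) + 8 * (\<Sum>i=2..N. ennreal (G i))"
  proof -
    have s: "(\<Sum>i=1..N. 2 * G i) = 2 * G 1 + (\<Sum>i=2..N. 2 * G i)"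
      using N sum.atLeast_Suc_atMost[of 1 N "\<lambda>i. 2 * G i"] by (simp add: numeral_2_eq_2)
    have "(\<Sum>i=1..N. 2 * G i) \<le> 4 * G 1 + 8 * (\<Sum>i=2..N. G i)"
      unfolding s using G0 by (simp add: sum_distrib_left[symmetric] sum_nonneg)
    then have "ennreal (\<Sum>i=1..N. 2 * G i) \<le> ennreal (4 * G 1 + 8 * (\<Sum>i=2..N. G i))"
      by (rule ennreal_leI)
    also have "\<dots> = 4 * ennreal (G 1) + 8 * (\<Sum>i=2..N. ennreal (G i))"
      using G0 by (simp add: ennreal_plus ennreal_mult sum_nonneg)
    finally show ?thesis .
  qed
  show ?thesis
    unfolding G_def[symmetric] unfolding obs_diam_def
  proof (rule SUP_least)
    fix f assume "f \<in> {f. lipschitz1 (PiE {1..N} X) (prod_metric N F d) f}"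
    then have l: "lipschitz1 (PiE {1..N} X) (prod_metric N F d) f" by simp
    have "partial_diam (distr (PiM {1..N} m) borel f) (1 - 2 * (\<Sum>i=1..N. \<kappa> i)) \<le> ennreal (\<Sum>i=1..N. 2 * G i)"
      unfolding G_def by (rule main_bound[OF N F], rule mm, assumption, rule \<kappa>, assumption, rule l)
    also have "\<dots> \<le> 4 * ennreal (G 1) + 8 * (\<Sum>i=2..N. ennreal (G i))" by (rule bound)
    finally show "partial_diam (distr (PiM {1..N} m) borel f) (1 - 2 * (\<Sum>i=1..N. \<kappa> i))
      \<le> 4 * ennreal (G 1) + 8 * (\<Sum>i=2..N. ennreal (G i))" .
  qed
qed

end
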